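(* Let $n,m\in\mathbb{N}$, $f:\mathbb{F}_2^n\to\mathbb{F}_2$, $\mathbf{y}\in\mathbb{F}_2^n$, and $h(\mathbf{x})=\mathbf{x}\cdot\mathbf{y}$. Then: (i) when $A^{(m)3,3}_n(h,f,f)$ is executed, the probability of measuring $\ket{0^n}$ is $2^{-2n}|C^{(m)}_f(\mathbf{y})|^2$; (ii) when $A^{(m)2,3}_n(h,f,f)$ is executed, the probability of measuring the driving qubit in $\ket{0}$ is $\frac12\left[1+\Re\left(2^{-n}\zeta_m^{-wt(\mathbf{y})}C^{(m)}_f(\mathbf{y})\right)\right]$.
   Context: $\zeta_m=e^{2\pi i/m}$, $\overline{\zeta_m}$ its conjugate; $wt$ is Hamming weight; $\mathbf{x}\cdot\mathbf{y}=\bigoplus_i x_iy_i$; $\mathbf{x}\odot\mathbf{y}=\sum_ix_iy_i$ in the integers. $m$-autocorrelation: $C^{(m)}_{f}(\mathbf{y})=\sum_{\mathbf{x}}(-1)^{f(\mathbf{x})\oplus f(\mathbf{x}\oplus\mathbf{y})}(\zeta_m^2)^{\mathbf{x}\odot\mathbf{y}}$. Gates: $\mathrm{H}$ Hadamard; $\Omega_m=\frac{1}{\sqrt2}\begin{pmatrix}1&\zeta_m\\1&-\zeta_m\end{pmatrix}$; $\overline{\Omega}_m=\frac{1}{\sqrt2}\begin{pmatrix}1&\overline{\zeta_m}\\1&-\overline{\zeta_m}\end{pmatrix}$; $\mathrm{S}_m=\mathrm{diag}(1,\zeta_m)$; $U_f$ is the phase oracle $\ket{\mathbf{x}}\mapsto(-1)^{f(\mathbf{x})}\ket{\mathbf{x}}$.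 Algorithm $A^{(m)3,3}_n(f_1,f_2,f_3)$: from $\ket{0^n}$ apply in order $\mathrm{H}^{\otimes n}$, $U_{f_2}$, $\Omega_m^{\otimes n}$, $U_{f_1}$, $\mathrm{H}^{\otimes n}$, $U_{f_3}$, $\overline{\Omega}_m^{\otimes n}$, then measure all qubits. Algorithm $A^{(m)2,3}_n(f_1,f_2,f_3)$: driving qubit in $\ket{+}$, $n$-qubit register in $\ket{0^n}$; apply $\mathrm{H}^{\otimes n}$ to the register; controlled on driving qubit $\ket{0}$ apply $U_{f_2}$, $\Omega_m^{\otimes n}$, $U_{f_1}$, $\mathrm{H}^{\otimes n}$ in order; controlled on driving qubit $\ket{1}$ apply $\mathrm{S}_m^{\otimes n}$, $U_{f_3}$ in order; apply $\mathrm{H}$ to the driving qubit and measure it. *)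

theory Defs
  imports Complex_Main
begin

section \<open>Bit vectors in F_2^n, represented as boolean lists of length n\<close>

definition bvecs :: "nat \<Rightarrow> bool list set" where
  "bvecs n = {xs. length xs = n}"

definition bdot :: "bool list \<Rightarrow> bool list \<Rightarrow> bool" where
  "bdot xs ys = odd (length (filter id (map2 (\<and>) xs ys)))"

definition idot :: "bool list \<Rightarrow> bool list \<Rightarrow> nat" where
  "idot xs ys = length (filter id (map2 (\<and>) xs ys))"

definition bxor :: "bool list \<Rightarrow> bool list \<Rightarrow> bool list" where
  "bxor xs ys = map2 (\<noteq>) xs ys"

definition wt :: "bool list \<Rightarrow> nat" where
  "wt xs = length (filter id xs)"

definition sgnb :: "bool \<Rightarrow> complex" where
  "sgnb b = (if b then -1 else 1)"

definition zeta :: "nat \<Rightarrow> complex" where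
  "zeta m = cis (2 * pi / real m)"

definition autocorr :: "nat \<Rightarrow> nat \<Rightarrow> (bool list \<Rightarrow> bool) \<Rightarrow> bool list \<Rightarrow> complex" where
  "autocorr m n f y =
     (\<Sum>x\<in>bvecs n. sgnb (f x \<noteq> f (bxor x y)) * ((zeta m)\<^sup>2) ^ idot x y)"

type_synonym state = "bool list \<Rightarrow> complex"

(* single-qubit gate: g out in is the matrix entry (row out, column in); False = |0>, True = |1> *)
type_synonym gate = "bool \<Rightarrow> bool \<Rightarrow> complex"

definition Hg :: gate where
  "Hg a b = (if a \<and> b then -1 else 1) / sqrt 2"

definition Omega :: "nat \<Rightarrow> gate" where
  "Omega m a b = (if b then (if a then - zeta m else zeta m) else 1) / sqrt 2"

definition Omegabar :: "nat \<Rightarrow> gate" where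
  "Omegabar m a b = (if b then (if a then - cnj (zeta m) else cnj (zeta m)) else 1) / sqrt 2"

definition Sg :: "nat \<Rightarrow> gate" where
  "Sg m a b = (if a \<noteq> b then 0 else if a then zeta m else 1)"

definition tensor_pow :: "nat \<Rightarrow> gate \<Rightarrow> state \<Rightarrow> state" where
  "tensor_pow n g \<psi> = (\<lambda>y. \<Sum>x\<in>bvecs n. (\<Prod>i<n. g (y ! i) (x ! i)) * \<psi> x)"

definition phase_orc :: "(bool list \<Rightarrow> bool) \<Rightarrow> state \<Rightarrow> state" where
  "phase_orc f \<psi> = (\<lambda>x. sgnb (f x) * \<psi> x)"

definition ket0 :: "nat \<Rightarrow> state" where
  "ket0 n = (\<lambda>x. if x = replicate n False then 1 else 0)"

definition A33_state :: "nat \<Rightarrow> nat \<Rightarrow> (bool list \<Rightarrow> bool) \<Rightarrow> (bool list \<Rightarrow> bool)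
    \<Rightarrow> (bool list \<Rightarrow> bool) \<Rightarrow> state" where
  "A33_state m n f1 f2 f3 =
     tensor_pow n (Omegabar m)
      (phase_orc f3
        (tensor_pow n Hg
          (phase_orc f1
            (tensor_pow n (Omega m)
              (phase_orc f2
                (tensor_pow n Hg (ket0 n)))))))"

definition A33_prob :: "nat \<Rightarrow> nat \<Rightarrow> (bool list \<Rightarrow> bool) \<Rightarrow> (bool list \<Rightarrow> bool)
    \<Rightarrow> (bool list \<Rightarrow> bool) \<Rightarrow> bool list \<Rightarrow> real" where
  "A33_prob m n f1 f2 f3 z = (cmod (A33_state m n f1 f2 f3 z))\<^sup>2"

section \<open>Algorithm A23 (driving qubit + n-qubit register)\<close>

type_synonym dstate = "bool \<times> bool list \<Rightarrow> complex"

definition init23 :: "nat \<Rightarrow> dstate" where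
  "init23 n = (\<lambda>(c, x). (if x = replicate n False then 1 / sqrt 2 else 0))"

definition reg_op :: "(state \<Rightarrow> state) \<Rightarrow> dstate \<Rightarrow> dstate" where
  "reg_op U \<psi> = (\<lambda>(c, x). U (\<lambda>z. \<psi> (c, z)) x)"

definition ctrl :: "bool \<Rightarrow> (state \<Rightarrow> state) \<Rightarrow> dstate \<Rightarrow> dstate" where
  "ctrl b U \<psi> = (\<lambda>(c, x). if c = b then U (\<lambda>z. \<psi> (c, z)) x else \<psi> (c, x))"

definition drive_gate :: "gate \<Rightarrow> dstate \<Rightarrow> dstate" where
  "drive_gate g \<psi> = (\<lambda>(c, x). g c False * \<psi> (False, x) + g c True * \<psi> (True, x))"

definition A23_state :: "nat \<Rightarrow> nat \<Rightarrow> (bool list \<Rightarrow> bool) \<Rightarrow> (bool list \<Rightarrow> bool)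
    \<Rightarrow> (bool list \<Rightarrow> bool) \<Rightarrow> dstate" where
  "A23_state m n f1 f2 f3 =
     drive_gate Hg
      (ctrl True (phase_orc f3)
        (ctrl True (tensor_pow n (Sg m))
          (ctrl False (tensor_pow n Hg)
            (ctrl False (phase_orc f1)
              (ctrl False (tensor_pow n (Omega m))
                (ctrl False (phase_orc f2)
                  (reg_op (tensor_pow n Hg) (init23 n))))))))"

definition A23_prob0 :: "nat \<Rightarrow> nat \<Rightarrow> (bool list \<Rightarrow> bool) \<Rightarrow> (bool list \<Rightarrow> bool)
    \<Rightarrow> (bool list \<Rightarrow> bool) \<Rightarrow> real" where
  "A23_prob0 m n f1 f2 f3 = (\<Sum>x\<in>bvecs n. (cmod (A23_state m n f1 f2 f3 (False, x)))\<^sup>2)"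

end

theory Submission
  imports Defs
begin

lemma idot_Cons[simp]: "idot (a#x) (b#y) = (if a \<and> b then 1 else 0) + idot x y"
  by (simp add: idot_def)
lemma idot_Nil[simp]: "idot [] y = 0" "idot x [] = 0"
  by (simp_all add: idot_def)
lemma wt_Cons[simp]: "wt (a#x) = (if a then 1 else 0) + wt x" "wt [] = 0"
  by (simp_all add: wt_def)
lemma bxor_Cons[simp]: "bxor (a#x) (b#y) = (a \<noteq> b) # bxor x y" "bxor [] y = []" "bxor x [] = []"
  by (simp_all add: bxor_def)
lemma length_bxor[simp]: "length (bxor x y) = min (length x) (length y)"
  by (simp add: bxor_def)

lemma sgnb_bdot: "sgnb (bdot x y) = (-1) ^ idot x y"
  by (simp add: sgnb_def bdot_def idot_def)

lemma sgnb_neq: "sgnb (a \<noteq> b) = sgnb a * sgnb b"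
  by (simp add: sgnb_def)

lemma idot_sym: "idot x y = idot y x"
proof (induction x arbitrary: y)
  case Nil then show ?case by simp
next
  case (Cons a x) then show ?case by (cases y) auto
qed

lemma idot_bxor_parity:
  "length u = length v \<Longrightarrow> (-1::complex) ^ idot z (bxor u v) = (-1) ^ idot z u * (-1) ^ idot z v"
proof (induction u v arbitrary: z rule: list_induct2)
  case Nil then show ?case by simp
next
  case (Cons a u b v) then show ?case by (cases z) (auto simp: power_add)
qed

lemma wt_bxor: "length w = length y \<Longrightarrow> wt (bxor w y) + 2 * idot w y = wt w + wt y"
  by (induction w y rule: list_induct2) auto

lemma bxor_bxor: "length x = length y \<Longrightarrow> bxor (bxor x y) y = x"
  by (induction x y rule: list_induct2) auto

lemma bxor_zero_iff: "length u = length x \<Longrightarrow> (bxor u x = replicate (length u) False) = (x = u)"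
  by (induction u x rule: list_induct2) auto

lemma finite_bvecs[simp]: "finite (bvecs n)"
proof -
  have "bvecs n = {xs. set xs \<subseteq> UNIV \<and> length xs = n}" by (simp add: bvecs_def)
  then show ?thesis using finite_lists_length_eq[of "UNIV::bool set" n] by simp
qed

lemma card_bvecs: "card (bvecs n) = 2 ^ n"
proof -
  have "bvecs n = {xs. set xs \<subseteq> UNIV \<and> length xs = n}" by (simp add: bvecs_def)
  then show ?thesis using card_lists_length_eq[of "UNIV::bool set" n] by simp
qed

lemma bvecs_Suc: "bvecs (Suc n) = Cons True ` bvecs n \<union> Cons False ` bvecs n"
  by (auto simp: bvecs_def length_Suc_conv)

lemma sum_bvecs_Suc: "sum g (bvecs (Suc n)) = sum (\<lambda>x. g (True#x)) (bvecs n) + sum (\<lambda>x. g (False#x)) (bvecs n)"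
  unfolding bvecs_Suc
  by (subst sum.union_disjoint) (auto simp: sum.reindex)

lemma char_sum:
  "length v = n \<Longrightarrow> (\<Sum>z\<in>bvecs n. (-1::complex) ^ idot z v) = (if v = replicate n False then 2 ^ n else 0)"
proof (induction n arbitrary: v)
  case 0 then show ?case by (simp add: bvecs_def)
next
  case (Suc n)
  then obtain b v' where v: "v = b # v'" "length v' = n" by (cases v) auto
  show ?case using Suc.IH[OF v(2)] by (cases b) (auto simp: sum_bvecs_Suc v power_add sum_negf)
qed

lemma sum_bxor_reindex:
  assumes "length y = n"
  shows "(\<Sum>x\<in>bvecs n. g (bxor x y)) = (\<Sum>x\<in>bvecs n. g x)"
  by (rule sum.reindex_bij_witness[where i="\<lambda>x. bxor x y" and j="\<lambda>x. bxor x y"])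
     (auto simp: bvecs_def assms bxor_bxor)

lemma prod_map2:
  "length z = n \<Longrightarrow> length x = n \<Longrightarrow> (\<Prod>i<n. g (z!i) (x!i)) = prod_list (map2 g z x)"
proof (induction z x arbitrary: n rule: list_induct2')
  case (4 a z b x) then show ?case by (auto simp del: prod.lessThan_Suc simp add: prod.lessThan_Suc_shift)
qed auto

definition hs :: complex where "hs = 1 / complex_of_real (sqrt 2)"

lemma hs_sq: "hs ^ 2 = 1 / 2"
  by (simp add: hs_def power_divide flip: of_real_power)

lemma hs_pow: "hs ^ (2*n) * 2 ^ n = 1"
  by (simp add: power_mult hs_sq power_divide)

lemma Hg_eq: "Hg a b = hs * (if a \<and> b then -1 else 1)"
  by (simp add: Hg_def hs_def)

lemma Omega_eq: "Omega m a b = hs * (if a \<and> b then -1 else 1) * (if b then zeta m else 1)"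
  by (simp add: Omega_def hs_def)

lemma Omegabar_eq: "Omegabar m False b = hs * (if b then cnj (zeta m) else 1)"
  by (simp add: Omegabar_def hs_def)

lemma prod_Hg: "length z = length x \<Longrightarrow> prod_list (map2 Hg z x) = hs ^ length z * (-1) ^ idot z x"
  by (induction z x rule: list_induct2) (auto simp: Hg_eq)

lemma prod_Omega: "length z = length x \<Longrightarrow>
   prod_list (map2 (Omega m) z x) = hs ^ length z * (-1) ^ idot z x * zeta m ^ wt x"
  by (induction z x rule: list_induct2) (auto simp: Omega_eq)

lemma prod_Sg: "length z = length x \<Longrightarrow>
   prod_list (map2 (Sg m) z x) = (if z = x then zeta m ^ wt x else 0)"
  by (induction z x rule: list_induct2) (auto simp: Sg_def)

lemma prod_Omegabar: "prod_list (map2 (Omegabar m) (replicate (length x) False) x) = hs ^ length x * cnj (zeta m) ^ wt x"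
  by (induction x) (auto simp: Omegabar_eq)

lemma replicate_in_bvecs[simp]: "replicate n False \<in> bvecs n"
  by (simp add: bvecs_def)

lemma T_H0: "tensor_pow n Hg (\<lambda>z. k * ket0 n z) = (\<lambda>y. k * hs ^ n)"
proof
  fix y
  have "tensor_pow n Hg (\<lambda>z. k * ket0 n z) y
     = (\<Sum>x\<in>bvecs n. if x = replicate n False then k * hs ^ n else 0)"
    unfolding tensor_pow_def ket0_def
  proof (rule sum.cong[OF refl])
    fix x assume "x \<in> bvecs n"
    have "(\<Prod>i<n. Hg (y ! i) (replicate n False ! i)) = (\<Prod>i<n. hs)"
      by (rule prod.cong) (auto simp: Hg_eq)
    then show "(\<Prod>i<n. Hg (y ! i) (x ! i)) * (k * (if x = replicate n False then 1 else 0)) =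
         (if x = replicate n False then k * hs ^ n else 0)" by auto
  qed
  also have "\<dots> = k * hs ^ n" by (simp add: sum.delta')
  finally show "tensor_pow n Hg (\<lambda>z. k * ket0 n z) y = k * hs ^ n" .
qed

lemma T_S: assumes "length x = n"
  shows "tensor_pow n (Sg m) (\<lambda>_. k) x = k * zeta m ^ wt x"
proof -
  have "tensor_pow n (Sg m) (\<lambda>_. k) x = (\<Sum>x'\<in>bvecs n. if x' = x then k * zeta m ^ wt x else 0)"
    unfolding tensor_pow_def
  proof (rule sum.cong[OF refl])
    fix x' assume "x' \<in> bvecs n"
    then show "(\<Prod>i<n. Sg m (x ! i) (x' ! i)) * k = (if x' = x then k * zeta m ^ wt x else 0)"
      using assms by (simp add: prod_map2 prod_Sg bvecs_def)
  qed
  also have "\<dots> = k * zeta m ^ wt x"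
  proof -
    have "x \<in> bvecs n" using assms by (simp add: bvecs_def)
    then show ?thesis by (subst sum.delta) auto
  qed
  finally show ?thesis .
qed

definition amp :: "(bool list \<Rightarrow> bool) \<Rightarrow> nat \<Rightarrow> bool list \<Rightarrow> complex" where
  "amp f m x = sgnb (f x) * zeta m ^ wt x"

lemma psi3: assumes "length z = n"
  shows "tensor_pow n (Omega m) (phase_orc f (\<lambda>_. k)) z
     = k * hs ^ n * (\<Sum>x\<in>bvecs n. (-1) ^ idot z x * amp f m x)"
  unfolding tensor_pow_def phase_orc_def sum_distrib_left
proof (rule sum.cong[OF refl])
  fix x assume "x \<in> bvecs n"
  then show "(\<Prod>i<n. Omega m (z ! i) (x ! i)) * (sgnb (f x) * k) =
         k * hs ^ n * ((- 1) ^ idot z x * amp f m x)"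
    using assms by (simp add: prod_map2 prod_Omega bvecs_def amp_def)
qed

lemma L5: assumes "length w = n" "length y = n"
  shows "tensor_pow n Hg (phase_orc (\<lambda>x. bdot x y) (tensor_pow n (Omega m) (phase_orc f (\<lambda>_. k)))) w
     = k * amp f m (bxor w y)"
proof -
  let ?u = "bxor w y"
  have "tensor_pow n Hg (phase_orc (\<lambda>x. bdot x y) (tensor_pow n (Omega m) (phase_orc f (\<lambda>_. k)))) w
     = (\<Sum>z\<in>bvecs n. (\<Sum>x\<in>bvecs n. k * hs ^ (2*n) * amp f m x * (-1) ^ idot z (bxor ?u x)))"
    unfolding tensor_pow_def[of n Hg] phase_orc_def[of "\<lambda>x. bdot x y"]
  proof (rule sum.cong[OF refl])
    fix z assume z: "z \<in> bvecs n"
    then have lz: "length z = n" by (simp add: bvecs_def)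
    have "(\<Prod>i<n. Hg (w ! i) (z ! i)) * (sgnb (bdot z y) * tensor_pow n (Omega m) (phase_orc f (\<lambda>_. k)) z)
      = hs ^ n * (-1) ^ idot w z * ((-1) ^ idot z y * (k * hs ^ n * (\<Sum>x\<in>bvecs n. (-1) ^ idot z x * amp f m x)))"
      using lz assms by (simp add: prod_map2 prod_Hg psi3 sgnb_bdot)
    also have "\<dots> = (\<Sum>x\<in>bvecs n. k * hs ^ (2*n) * amp f m x * ((-1) ^ idot z w * (-1) ^ idot z y * (-1) ^ idot z x)) "
      proof -
        have e: "hs ^ (2*n) = hs ^ n * hs ^ n" by (simp add: mult_2 power_add)
        show ?thesis unfolding e by (simp add: sum_distrib_left idot_sym[of w z] algebra_simps)
      qed
    also have "\<dots> = (\<Sum>x\<in>bvecs n. k * hs ^ (2*n) * amp f m x * (-1) ^ idot z (bxor ?u x))"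
      by (rule sum.cong[OF refl]) (simp add: idot_bxor_parity assms bvecs_def)
    finally show "(\<Prod>i<n. Hg (w ! i) (z ! i)) * (sgnb (bdot z y) * tensor_pow n (Omega m) (phase_orc f (\<lambda>_. k)) z)
      = (\<Sum>x\<in>bvecs n. k * hs ^ (2*n) * amp f m x * (-1) ^ idot z (bxor ?u x))" .
  qed
  also have "\<dots> = (\<Sum>x\<in>bvecs n. k * hs ^ (2*n) * amp f m x * (\<Sum>z\<in>bvecs n. (-1) ^ idot z (bxor ?u x)))"
    by (subst sum.swap) (simp add: sum_distrib_left)
  also have "\<dots> = (\<Sum>x\<in>bvecs n. if x = ?u then k * hs ^ (2*n) * amp f m x * 2 ^ n else 0)"
  proof (rule sum.cong[OF refl])
    fix x assume "x \<in> bvecs n"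
    then have lx: "length x = n" by (simp add: bvecs_def)
    have "(bxor ?u x = replicate n False) = (x = ?u)"
      using bxor_zero_iff[of ?u x] lx assms by simp
    then show "k * hs ^ (2*n) * amp f m x * (\<Sum>z\<in>bvecs n. (-1) ^ idot z (bxor ?u x))
        = (if x = ?u then k * hs ^ (2*n) * amp f m x * 2 ^ n else 0)"
      using char_sum[of "bxor ?u x" n] lx assms by simp
  qed
  also have "\<dots> = k * hs ^ (2*n) * amp f m ?u * 2 ^ n"
  proof -
    have "?u \<in> bvecs n" using assms by (simp add: bvecs_def)
    then show ?thesis by (subst sum.delta) auto
  qed
  also have "\<dots> = k * amp f m ?u" using hs_pow[of n] by (simp add: algebra_simps)
  finally show ?thesis .
qed

lemma zeta_id: assumes "length w = length y"
  shows "cnj (zeta m) ^ wt w * zeta m ^ wt (bxor w y) = zeta m ^ wt y * cnj ((zeta m ^ 2) ^ idot w y)"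
proof -
  define t where "t = 2 * pi / real m"
  have z: "zeta m = cis t" by (simp add: zeta_def t_def)
  have e: "real (wt (bxor w y)) = real (wt w) + real (wt y) - 2 * real (idot w y)"
    using wt_bxor[OF assms] by (metis add_diff_cancel_right' of_nat_add of_nat_mult of_nat_numeral)
  have "cnj (zeta m) ^ wt w * zeta m ^ wt (bxor w y) = cis (real (wt (bxor w y)) * t - real (wt w) * t)"
    by (simp add: z cis_cnj DeMoivre cis_mult algebra_simps)
  also have "\<dots> = cis (real (wt y) * t - real (idot w y) * (2 * t))"
    unfolding e by (simp add: algebra_simps)
  also have "\<dots> = zeta m ^ wt y * cnj ((zeta m ^ 2) ^ idot w y)"
    by (simp add: z cis_cnj DeMoivre cis_mult algebra_simps)
  finally show ?thesis .
qed

lemma cnj_sgnb[simp]: "cnj (sgnb b) = sgnb b"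
  by (simp add: sgnb_def)

lemma Tsum: assumes "length y = n"
  shows "(\<Sum>w\<in>bvecs n. cnj (amp f m w) * amp f m (bxor w y)) = zeta m ^ wt y * cnj (autocorr m n f y)"
  unfolding autocorr_def cnj_sum sum_distrib_left
proof (rule sum.cong[OF refl])
  fix w assume "w \<in> bvecs n"
  then have lw: "length w = length y" using assms by (simp add: bvecs_def)
  have "cnj (amp f m w) * amp f m (bxor w y)
     = sgnb (f w) * sgnb (f (bxor w y)) * (cnj (zeta m) ^ wt w * zeta m ^ wt (bxor w y))"
    by (simp add: amp_def algebra_simps)
  also have "\<dots> = zeta m ^ wt y * cnj (sgnb (f w \<noteq> f (bxor w y)) * (zeta m)\<^sup>2 ^ idot w y)"
    unfolding zeta_id[OF lw] sgnb_neq by simp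
  finally show "cnj (amp f m w) * amp f m (bxor w y) = zeta m ^ wt y * cnj (sgnb (f w \<noteq> f (bxor w y)) * (zeta m)\<^sup>2 ^ idot w y)" .
qed

lemma norm_hs: "cmod hs ^ 2 = 1 / 2"
  by (simp add: hs_def norm_divide power_divide)

lemma norm_zeta[simp]: "cmod (zeta m) = 1"
  by (simp add: zeta_def)

lemma phase_orc_app: "phase_orc f \<psi> x = sgnb (f x) * \<psi> x"
  by (simp add: phase_orc_def)

lemma part1: assumes "length y = n"
  shows "A33_prob m n (\<lambda>x. bdot x y) f f (replicate n False) = (cmod (autocorr m n f y))\<^sup>2 / 2 ^ (2 * n)"
proof -
  have H0: "tensor_pow n Hg (ket0 n) = (\<lambda>_. hs ^ n)" using T_H0[of n 1] by simp
  have "A33_state m n (\<lambda>x. bdot x y) f f (replicate n False)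
      = (\<Sum>w\<in>bvecs n. hs ^ n * hs ^ n * (cnj (amp f m w) * amp f m (bxor w y)))"
    unfolding A33_state_def H0 tensor_pow_def[of n "Omegabar m"]
  proof (rule sum.cong[OF refl])
    fix w assume "w \<in> bvecs n"
    then have lw: "length w = n" by (simp add: bvecs_def)
    have p: "(\<Prod>i<n. Omegabar m (replicate n False ! i) (w ! i)) = hs ^ n * cnj (zeta m) ^ wt w"
      using prod_map2[of "replicate n False" n w "Omegabar m"] prod_Omegabar[of m w] lw by simp
    show "(\<Prod>i<n. Omegabar m (replicate n False ! i) (w ! i)) *
         phase_orc f (tensor_pow n Hg (phase_orc (\<lambda>x. bdot x y) (tensor_pow n (Omega m) (phase_orc f (\<lambda>_. hs ^ n))))) w =
         hs ^ n * hs ^ n * (cnj (amp f m w) * amp f m (bxor w y))"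
      unfolding p by (subst phase_orc_app, subst L5[OF lw assms]) (simp add: amp_def algebra_simps)
  qed
  also have "\<dots> = hs ^ n * hs ^ n * (zeta m ^ wt y * cnj (autocorr m n f y))"
    by (simp add: sum_distrib_left[symmetric] Tsum[OF assms])
  finally have e: "A33_state m n (\<lambda>x. bdot x y) f f (replicate n False) = \<dots>" .
  have "(cmod hs ^ n) ^ 2 = (cmod hs ^ 2) ^ n" by (simp add: power_mult[symmetric] mult.commute)
  then have "(cmod hs ^ n) ^ 2 = 1 / 2 ^ n" by (simp add: norm_hs power_divide)
  moreover have "(2::real) ^ n * 2 ^ n = 4 ^ n" by (simp flip: power_mult_distrib)
  ultimately show ?thesis unfolding A33_prob_def e
    by (simp add: norm_mult norm_power power_mult_distrib power_mult power_divide)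
qed

lemma ctrl_F: "ctrl False U (\<lambda>(c,x). if c then B x else A x) = (\<lambda>(c,x). if c then B x else U A x)"
  by (auto simp: ctrl_def fun_eq_iff)
lemma ctrl_T: "ctrl True U (\<lambda>(c,x). if c then B x else A x) = (\<lambda>(c,x). if c then U B x else A x)"
  by (auto simp: ctrl_def fun_eq_iff)
lemma reg_op_split: "reg_op U (\<lambda>(c,x). if c then B x else A x) = (\<lambda>(c,x). if c then U B x else U A x)"
  by (auto simp: reg_op_def fun_eq_iff)
lemma init23_split: "init23 n = (\<lambda>(c,x). if c then hs * ket0 n x else hs * ket0 n x)"
  by (auto simp: init23_def ket0_def hs_def fun_eq_iff)

lemma norm_amp[simp]: "cmod (amp f m x) = 1"
  by (simp add: amp_def sgnb_def norm_mult norm_power)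

lemma cmod_add_sq: "cmod (u + v) ^ 2 = cmod u ^ 2 + cmod v ^ 2 + 2 * Re (cnj v * u)"
  by (simp add: cmod_power2) (simp add: power2_eq_square algebra_simps)

lemma part2: assumes "length y = n"
  shows "A23_prob0 m n (\<lambda>x. bdot x y) f f
           = (1 + Re (inverse (2 ^ n) * inverse (zeta m) ^ wt y * autocorr m n f y)) / 2"
proof -
  let ?k = "hs * hs ^ n"
  have H0: "tensor_pow n Hg (\<lambda>z. hs * ket0 n z) = (\<lambda>_. ?k)" by (rule T_H0)
  have st: "A23_state m n (\<lambda>x. bdot x y) f f (False, x) =
     hs * (tensor_pow n Hg (phase_orc (\<lambda>x. bdot x y) (tensor_pow n (Omega m) (phase_orc f (\<lambda>_. ?k)))) x
          + phase_orc f (tensor_pow n (Sg m) (\<lambda>_. ?k)) x)" for x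
    unfolding A23_state_def init23_split reg_op_split ctrl_F ctrl_T H0
    by (simp add: drive_gate_def Hg_eq distrib_left)
  have tm: "cmod (A23_state m n (\<lambda>x. bdot x y) f f (False, x)) ^ 2
      = (1/2) ^ (n+2) * (2 + 2 * Re (cnj (amp f m x) * amp f m (bxor x y)))" if "x \<in> bvecs n" for x
  proof -
    have lx: "length x = n" using that by (simp add: bvecs_def)
    have "A23_state m n (\<lambda>x. bdot x y) f f (False, x) = hs * ?k * (amp f m (bxor x y) + amp f m x)"
      unfolding st L5[OF lx assms] phase_orc_app T_S[OF lx] by (simp add: amp_def algebra_simps)
    moreover have "cmod (hs * ?k) ^ 2 = (1/2) ^ (n+2)"
    proof -
      have "cmod (hs * ?k) ^ 2 = (cmod hs ^ 2) ^ (n+2)"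
        by (simp add: norm_mult norm_power power_mult_distrib power_add mult.commute flip: power_mult)
      then show ?thesis by (simp add: norm_hs)
    qed
    ultimately show ?thesis by (simp add: norm_mult power_mult_distrib cmod_add_sq)
  qed
  have "A23_prob0 m n (\<lambda>x. bdot x y) f f
      = (\<Sum>x\<in>bvecs n. (1/2) ^ (n+2) * (2 + 2 * Re (cnj (amp f m x) * amp f m (bxor x y))))"
    unfolding A23_prob0_def by (rule sum.cong[OF refl]) (rule tm)
  also have "\<dots> = (1/2) ^ (n+2) * (2 * 2 ^ n + 2 * Re (\<Sum>x\<in>bvecs n. cnj (amp f m x) * amp f m (bxor x y)))"
  proof -
    have g: "(\<Sum>x\<in>bvecs n. (1/2::real) ^ (n+2) * (2 + 2 * R x)) = (1/2) ^ (n+2) * (2 * 2 ^ n + 2 * (\<Sum>x\<in>bvecs n. R x))" for R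
    proof -
      have "(\<Sum>x\<in>bvecs n. (2::real) + 2 * R x) = 2 * 2 ^ n + 2 * (\<Sum>x\<in>bvecs n. R x)"
        by (simp add: sum.distrib card_bvecs sum_distrib_left)
      then show ?thesis by (simp only: sum_distrib_left[symmetric])
    qed
    show ?thesis unfolding g Re_sum ..
  qed
  also have "\<dots> = (1/2) ^ (n+2) * (2 * 2 ^ n + 2 * Re (zeta m ^ wt y * cnj (autocorr m n f y)))"
    by (simp add: Tsum[OF assms])
  also have "Re (zeta m ^ wt y * cnj (autocorr m n f y)) = Re (inverse (zeta m) ^ wt y * autocorr m n f y)"
  proof -
    have "Re (zeta m ^ wt y * cnj (autocorr m n f y)) = Re (cnj (zeta m ^ wt y * cnj (autocorr m n f y)))"
      by (simp only: cnj.sel(1))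
    also have "\<dots> = Re (inverse (zeta m) ^ wt y * autocorr m n f y)"
    proof -
      have inv: "inverse (zeta m) = cnj (zeta m)" by (simp add: zeta_def cis_cnj cis_inverse)
      show ?thesis by (simp only: inv complex_cnj_mult complex_cnj_power complex_cnj_cnj)
    qed
    finally show ?thesis .
  qed
  finally have X: "A23_prob0 m n (\<lambda>x. bdot x y) f f = (1/2) ^ (n+2) * (2 * 2 ^ n + 2 * Re (inverse (zeta m) ^ wt y * autocorr m n f y))" .
  have Y: "Re (inverse (2 ^ n) * inverse (zeta m) ^ wt y * autocorr m n f y)
      = Re (inverse (zeta m) ^ wt y * autocorr m n f y) / 2 ^ n"
  proof -
    have "inverse ((2::complex) ^ n) = complex_of_real (1 / 2 ^ n)" by (simp add: inverse_eq_divide)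
    then show ?thesis by (simp add: mult.assoc)
  qed
  show ?thesis unfolding X Y by (simp add: field_simps power_add)
qed

theorem corollary2:
  fixes n m :: nat and f :: "bool list \<Rightarrow> bool" and y :: "bool list"
  assumes "length y = n"
  shows "A33_prob m n (\<lambda>x. bdot x y) f f (replicate n False)
           = (cmod (autocorr m n f y))\<^sup>2 / 2 ^ (2 * n)
       \<and> A23_prob0 m n (\<lambda>x. bdot x y) f f
           = (1 + Re (inverse (2 ^ n) * inverse (zeta m) ^ wt y * autocorr m n f y)) / 2"
  using part1[OF assms] part2[OF assms] by blast

end
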